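(* For all $u\le v\in\mathbb{Z}^2$ and $\lambda\in(0,1)$: on the event $E_{\rightarrow}(\lambda;u,v)$, the path $\pi_-(u,v)$ is above $\pi_-(\lambda;u,v)$; and on the event $E_{\uparrow}(\lambda;u,v)$, the path $\pi_+(\lambda;u,v)$ is above $\pi_+(u,v)$.
   Context: Fix $p\in(0,1)$; bulk weights $(\omega_x)_{x\in\mathbb{Z}^2}$ i.i.d. with $\mathbb{P}(\omega_x=k)=p(1-p)^k$, $k\ge0$. $\mathbf{e}_1=(1,0),\mathbf{e}_2=(0,1),\mathbf{e}_+=(1,1)$; $u\le v$ coordinatewise; $R_{u,v}=[u_1,v_1]\times[u_2,v_2]$; $H_x=\mathbb{R}\times\{x_2\}$, $V_x=\{x_1\}\times\mathbb{R}$. Directed paths use steps $\mathbf{e}_1,\mathbf{e}_2$; $T(x,y)$ is the maximal weight $\sum_{z\in\gamma}\omega_z$ over directed paths from $x$ to $y$. Boundary weights for $\lambda\in(0,1)$: let $q(\lambda)=\frac{p\lambda+p\sqrt{(1-p)\lambda(1-\lambda)}}{1-p+p\lambda+2\sqrt{(1-p)\lambda(1-\lambda)}}$, $p_H=q(\lambda)$, $p_V=1-\frac{1-p}{1-q(\lambda)}$. For a base vertex $u$, take $(\omega^V_{u+j\mathbf{e}_2}(\lambda))_{j\in\mathbb{Z}}$ i.i.d. geometric with parameter $p_V$ independent of the bulk, set $L(u)=0$, $L(u+j\mathbf{e}_2)-L(u+(j-1)\mathbf{e}_2)=\omega^V_{u+j\mathbf{e}_2}(\lambda)$, for $x\in u+\mathbb{Z}_{>0}\times\mathbb{Z}$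 let $L(x)=\sup_{j\le x_2-u_2}[L(u+j\mathbf{e}_2)+T(u+\mathbf{e}_1+j\mathbf{e}_2,x)]$, and $\omega^H_x(\lambda)=L(x)-L(x-\mathbf{e}_1)$, $\omega^V_x(\lambda)=L(x)-L(x-\mathbf{e}_2)$. The law of $(\omega_x,\omega^H_x(\lambda),\omega^V_x(\lambda))$ converges as $u=(-m,-m)$, $m\to\infty$, to a law on all of $\mathbb{Z}^2$ whose restriction to each $u+\mathbb{Z}_{\ge0}^2$ agrees with the construction based at $u$; we work under this full-plane law. For a directed path $\gamma$ from $x$ to $y$, $T(\lambda;\gamma)=\sum_{z\in\gamma\cap H_x\setminus\{x\}}\omega^H_z(\lambda)+\sum_{z\in\gamma\cap V_x\setminus\{x\}}\omega^V_z(\lambda)+\sum_{z\in\gamma\cap R_{x+\mathbf{e}_+,y}}\omega_z$; $T(\lambda;x,y)$ is its maximum over directed paths from $x$ to $y$, and maximizers are $\lambda$-geodesics. A path $\gamma$ is above $\gamma'$ if for every vertical line $V$ meeting both, $\min(\gamma\cap V)\ge\min(\gamma'\cap V)$. $\pi_+(u,v)$, $\pi_-(u,v)$ are the upmost (above all others) and downmost geodesics for $T(u,v)$, and $\pi_\pm(\lambda;u,v)$ the analogous $\lambda$-geodesics. $E_{\rightarrow}(\lambda;u,v)=\{u+\mathbf{e}_1\in\pi_-(\lambda;u,v)\}$, $E_{\uparrow}(\lambda;u,v)=\{u+\mathbf{e}_2\in\pi_+(\lambda;u,v)\}$. *)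

theory Defs
  imports Main
begin

type_synonym pt = "int \<times> int"

definition cle :: "pt \<Rightarrow> pt \<Rightarrow> bool" where
  "cle u v \<longleftrightarrow> fst u \<le> fst v \<and> snd u \<le> snd v"

definition e1 :: pt where "e1 = (1, 0)"
definition e2 :: pt where "e2 = (0, 1)"

definition padd :: "pt \<Rightarrow> pt \<Rightarrow> pt" where
  "padd x y = (fst x + fst y, snd x + snd y)"

definition dpath :: "pt list \<Rightarrow> pt \<Rightarrow> pt \<Rightarrow> bool" where
  "dpath \<gamma> x y \<longleftrightarrow> \<gamma> \<noteq> [] \<and> hd \<gamma> = x \<and> last \<gamma> = y \<and>
     (\<forall>i. Suc i < length \<gamma> \<longrightarrow>
        \<gamma> ! Suc i = padd (\<gamma> ! i) e1 \<or> \<gamma> ! Suc i = padd (\<gamma> ! i) e2)"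

definition pweight :: "(pt \<Rightarrow> nat) \<Rightarrow> pt list \<Rightarrow> int" where
  "pweight \<omega> \<gamma> = (\<Sum>z\<in>set \<gamma>. int (\<omega> z))"

definition LPP :: "(pt \<Rightarrow> nat) \<Rightarrow> pt \<Rightarrow> pt \<Rightarrow> int" where
  "LPP \<omega> x y = Max (pweight \<omega> ` {\<gamma>. dpath \<gamma> x y})"

definition lweight :: "(pt \<Rightarrow> nat) \<Rightarrow> (pt \<Rightarrow> int) \<Rightarrow> (pt \<Rightarrow> int) \<Rightarrow> pt \<Rightarrow> pt \<Rightarrow> pt list \<Rightarrow> int" where
  "lweight \<omega> \<omega>H \<omega>V x y \<gamma> =
     (\<Sum>z\<in>(set \<gamma> \<inter> {z. snd z = snd x}) - {x}. \<omega>H z)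
   + (\<Sum>z\<in>(set \<gamma> \<inter> {z. fst z = fst x}) - {x}. \<omega>V z)
   + (\<Sum>z\<in>set \<gamma> \<inter> {z. fst x + 1 \<le> fst z \<and> fst z \<le> fst y \<and> snd x + 1 \<le> snd z \<and> snd z \<le> snd y}.
        int (\<omega> z))"

definition geodesic :: "(pt \<Rightarrow> nat) \<Rightarrow> pt \<Rightarrow> pt \<Rightarrow> pt list \<Rightarrow> bool" where
  "geodesic \<omega> x y \<gamma> \<longleftrightarrow> dpath \<gamma> x y \<and>
     (\<forall>\<gamma>'. dpath \<gamma>' x y \<longrightarrow> pweight \<omega> \<gamma>' \<le> pweight \<omega> \<gamma>)"

definition lgeodesic :: "(pt \<Rightarrow> nat) \<Rightarrow> (pt \<Rightarrow> int) \<Rightarrow> (pt \<Rightarrow> int) \<Rightarrow> pt \<Rightarrow> pt \<Rightarrow> pt list \<Rightarrow> bool" where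
  "lgeodesic \<omega> \<omega>H \<omega>V x y \<gamma> \<longleftrightarrow> dpath \<gamma> x y \<and>
     (\<forall>\<gamma>'. dpath \<gamma>' x y \<longrightarrow> lweight \<omega> \<omega>H \<omega>V x y \<gamma>' \<le> lweight \<omega> \<omega>H \<omega>V x y \<gamma>)"

definition above :: "pt list \<Rightarrow> pt list \<Rightarrow> bool" where
  "above \<gamma> \<gamma>' \<longleftrightarrow> (\<forall>a. (\<exists>z\<in>set \<gamma>. fst z = a) \<and> (\<exists>z\<in>set \<gamma>'. fst z = a) \<longrightarrow>
      Min {snd z | z. z \<in> set \<gamma>' \<and> fst z = a} \<le> Min {snd z | z. z \<in> set \<gamma> \<and> fst z = a})"

definition pi_plus :: "(pt \<Rightarrow> nat) \<Rightarrow> pt \<Rightarrow> pt \<Rightarrow> pt list" where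
  "pi_plus \<omega> u v = (THE \<gamma>. geodesic \<omega> u v \<gamma> \<and> (\<forall>\<gamma>'. geodesic \<omega> u v \<gamma>' \<longrightarrow> above \<gamma> \<gamma>'))"

definition pi_minus :: "(pt \<Rightarrow> nat) \<Rightarrow> pt \<Rightarrow> pt \<Rightarrow> pt list" where
  "pi_minus \<omega> u v = (THE \<gamma>. geodesic \<omega> u v \<gamma> \<and> (\<forall>\<gamma>'. geodesic \<omega> u v \<gamma>' \<longrightarrow> above \<gamma>' \<gamma>))"

definition lpi_plus :: "(pt \<Rightarrow> nat) \<Rightarrow> (pt \<Rightarrow> int) \<Rightarrow> (pt \<Rightarrow> int) \<Rightarrow> pt \<Rightarrow> pt \<Rightarrow> pt list" where
  "lpi_plus \<omega> \<omega>H \<omega>V u v = (THE \<gamma>. lgeodesic \<omega> \<omega>H \<omega>V u v \<gamma> \<and>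
      (\<forall>\<gamma>'. lgeodesic \<omega> \<omega>H \<omega>V u v \<gamma>' \<longrightarrow> above \<gamma> \<gamma>'))"

definition lpi_minus :: "(pt \<Rightarrow> nat) \<Rightarrow> (pt \<Rightarrow> int) \<Rightarrow> (pt \<Rightarrow> int) \<Rightarrow> pt \<Rightarrow> pt \<Rightarrow> pt list" where
  "lpi_minus \<omega> \<omega>H \<omega>V u v = (THE \<gamma>. lgeodesic \<omega> \<omega>H \<omega>V u v \<gamma> \<and>
      (\<forall>\<gamma>'. lgeodesic \<omega> \<omega>H \<omega>V u v \<gamma>' \<longrightarrow> above \<gamma>' \<gamma>))"

text \<open>Boundary construction based at b: c j is the column weight at b + j e2 (j in Z);
  L(b) = 0 and L(b + j e2) - L(b + (j-1) e2) = c j.\<close>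
definition Lcol :: "(int \<Rightarrow> nat) \<Rightarrow> int \<Rightarrow> int" where
  "Lcol c j = (if 0 \<le> j then (\<Sum>i\<in>{1..j}. int (c i)) else - (\<Sum>i\<in>{j+1..0}. int (c i)))"

definition Lset :: "(pt \<Rightarrow> nat) \<Rightarrow> (int \<Rightarrow> nat) \<Rightarrow> pt \<Rightarrow> pt \<Rightarrow> int set" where
  "Lset \<omega> c b x = {Lcol c j + LPP \<omega> (fst b + 1, snd b + j) x | j. j \<le> snd x - snd b}"

definition Lfun :: "(pt \<Rightarrow> nat) \<Rightarrow> (int \<Rightarrow> nat) \<Rightarrow> pt \<Rightarrow> pt \<Rightarrow> int" where
  "Lfun \<omega> c b x = (if fst x = fst b then Lcol c (snd x - snd b) else Sup (Lset \<omega> c b x))"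

definition omH :: "(pt \<Rightarrow> nat) \<Rightarrow> (int \<Rightarrow> nat) \<Rightarrow> pt \<Rightarrow> pt \<Rightarrow> int" where
  "omH \<omega> c b x = Lfun \<omega> c b x - Lfun \<omega> c b (fst x - 1, snd x)"

definition omV :: "(pt \<Rightarrow> nat) \<Rightarrow> (int \<Rightarrow> nat) \<Rightarrow> pt \<Rightarrow> pt \<Rightarrow> int" where
  "omV \<omega> c b x = Lfun \<omega> c b x - Lfun \<omega> c b (fst x, snd x - 1)"

end

theory Submission
  imports Defs
begin

definition ps :: "pt \<Rightarrow> int" where "ps z = fst z + snd z"

lemma dpath_step:
  assumes "dpath \<gamma> x y" "Suc i < length \<gamma>"
  shows "(fst (\<gamma>!Suc i) = fst (\<gamma>!i) \<and> snd (\<gamma>!Suc i) = snd (\<gamma>!i) + 1) \<or>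
         (fst (\<gamma>!Suc i) = fst (\<gamma>!i) + 1 \<and> snd (\<gamma>!Suc i) = snd (\<gamma>!i))"
  using assms unfolding dpath_def padd_def e1_def e2_def by auto

lemma dpath_0: "dpath \<gamma> x y \<Longrightarrow> \<gamma>!0 = x"
  unfolding dpath_def by (auto simp: hd_conv_nth)

lemma dpath_last: "dpath \<gamma> x y \<Longrightarrow> \<gamma>!(length \<gamma> - 1) = y"
  unfolding dpath_def by (auto simp: last_conv_nth)

lemma dpath_len: "dpath \<gamma> x y \<Longrightarrow> 0 < length \<gamma>"
  unfolding dpath_def by auto

lemma dpath_sum:
  assumes "dpath \<gamma> x y" "i < length \<gamma>"
  shows "ps (\<gamma>!i) = ps x + int i"
  using assms(2)
proof (induction i)
  case 0 then show ?case using dpath_0[OF assms(1)] by simp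
next
  case (Suc i)
  then show ?case using dpath_step[OF assms(1) Suc.prems] by (auto simp: ps_def)
qed

lemma dpath_mono:
  assumes "dpath \<gamma> x y" "i \<le> j" "j < length \<gamma>"
  shows "fst (\<gamma>!i) \<le> fst (\<gamma>!j) \<and> snd (\<gamma>!i) \<le> snd (\<gamma>!j)"
  using assms(2,3)
proof (induction j)
  case 0 then show ?case by simp
next
  case (Suc j)
  show ?case
  proof (cases "i = Suc j")
    case False
    then have "i \<le> j" using Suc.prems by simp
    then show ?thesis using Suc.IH Suc.prems dpath_step[OF assms(1) Suc.prems(2)] by auto
  qed simp
qed

lemma dpath_box:
  assumes "dpath \<gamma> x y" "z \<in> set \<gamma>"
  shows "fst x \<le> fst z \<and> fst z \<le> fst y \<and> snd x \<le> snd z \<and> snd z \<le> snd y"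
proof -
  obtain i where i: "i < length \<gamma>" "\<gamma>!i = z" using assms(2) by (auto simp: in_set_conv_nth)
  have "fst (\<gamma>!0) \<le> fst (\<gamma>!i) \<and> snd (\<gamma>!0) \<le> snd (\<gamma>!i)" using dpath_mono[OF assms(1), of 0 i] i by simp
  moreover have "fst (\<gamma>!i) \<le> fst (\<gamma>!(length \<gamma> - 1)) \<and> snd (\<gamma>!i) \<le> snd (\<gamma>!(length \<gamma> - 1))"
    using dpath_mono[OF assms(1), of i "length \<gamma> - 1"] i by simp
  ultimately show ?thesis using dpath_0[OF assms(1)] dpath_last[OF assms(1)] i by simp
qed

lemma dpath_length:
  assumes "dpath \<gamma> x y" shows "int (length \<gamma>) = ps y - ps x + 1"
  using dpath_sum[OF assms, of "length \<gamma> - 1"] dpath_last[OF assms] dpath_len[OF assms] by simp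

lemma dpath_distinct:
  assumes "dpath \<gamma> x y" shows "distinct \<gamma>"
proof -
  have "\<gamma>!i \<noteq> \<gamma>!j" if "i < length \<gamma>" "j < length \<gamma>" "i \<noteq> j" for i j
    using dpath_sum[OF assms that(1)] dpath_sum[OF assms that(2)] that(3) by auto
  then show ?thesis by (auto simp: distinct_conv_nth)
qed

lemma dpath_ivt:
  assumes "dpath \<gamma> x y" "i < length \<gamma>" "fst (\<gamma>!0) \<le> a" "a \<le> fst (\<gamma>!i)"
  shows "\<exists>j\<le>i. fst (\<gamma>!j) = a"
  using assms(2,4)
proof (induction i)
  case 0 then show ?case using assms(3) by auto
next
  case (Suc i)
  show ?case
  proof (cases "a \<le> fst (\<gamma>!i)")
    case True then show ?thesis using Suc by (meson Suc_lessD le_SucI)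
  next
    case False then show ?thesis using dpath_step[OF assms(1) Suc.prems(1)] Suc.prems by (metis add1_zle_eq le_refl linorder_not_le order_antisym_conv)
  qed
qed

lemma dpath_eqI:
  assumes "dpath A x y" "dpath B x y" "\<forall>i<length A. fst (A!i) = fst (B!i)"
  shows "A = B"
proof -
  have l: "length A = length B" using dpath_length[OF assms(1)] dpath_length[OF assms(2)] by simp
  show ?thesis
  proof (rule nth_equalityI[OF l])
    fix i assume i: "i < length A"
    have "ps (A!i) = ps (B!i)" using dpath_sum[OF assms(1) i] dpath_sum[OF assms(2)] i l by simp
    then show "A!i = B!i" using assms(3) i by (simp add: ps_def prod_eq_iff)
  qed
qed

lemma dpath_snoc:
  assumes "dpath \<gamma> x y" "z = padd y e1 \<or> z = padd y e2"
  shows "dpath (\<gamma>@[z]) x z"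
proof -
  have ne: "\<gamma> \<noteq> []" using assms(1) dpath_def by auto
  have "(\<gamma>@[z]) ! Suc i = padd ((\<gamma>@[z]) ! i) e1 \<or> (\<gamma>@[z]) ! Suc i = padd ((\<gamma>@[z]) ! i) e2"
    if "Suc i < length (\<gamma>@[z])" for i
  proof (cases "Suc i < length \<gamma>")
    case True then show ?thesis using assms(1) unfolding dpath_def by (auto simp: nth_append)
  next
    case False
    then have si: "Suc i = length \<gamma>" using that by simp
    then have "i = length \<gamma> - 1" by simp
    then have "\<gamma>!i = y" using dpath_last[OF assms(1)] by simp
    then show ?thesis using assms(2) si by (auto simp: nth_append)
  qed
  then show ?thesis using assms(1) ne unfolding dpath_def by auto
qed

lemma dpath_exists:
  assumes "cle x y" shows "\<exists>\<gamma>. dpath \<gamma> x y"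
proof -
  have "\<forall>y. cle x y \<and> nat (ps y - ps x) = n \<longrightarrow> (\<exists>\<gamma>. dpath \<gamma> x y)" for n
  proof (induction n)
    case 0
    have "dpath [x] x x" by (simp add: dpath_def)
    moreover have "y = x" if "cle x y \<and> nat (ps y - ps x) = 0" for y
    proof -
      have "fst x \<le> fst y" "snd x \<le> snd y" "fst y + snd y \<le> fst x + snd x"
        using that by (auto simp: cle_def ps_def)
      then show ?thesis by (simp add: prod_eq_iff)
    qed
    ultimately show ?case by blast
  next
    case (Suc n)
    show ?case
    proof (intro allI impI)
      fix y assume y: "cle x y \<and> nat (ps y - ps x) = Suc n"
      show "\<exists>\<gamma>. dpath \<gamma> x y"
      proof (cases "fst x < fst y")
        case True
        define y' where "y' = (fst y - 1, snd y)"
        have "cle x y' \<and> nat (ps y' - ps x) = n" using y True by (auto simp: cle_def ps_def y'_def)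
        then obtain \<gamma> where "dpath \<gamma> x y'" using Suc.IH by blast
        moreover have "y = padd y' e1" by (simp add: y'_def padd_def e1_def)
        ultimately show ?thesis using dpath_snoc by blast
      next
        case False
        define y' where "y' = (fst y, snd y - 1)"
        have "cle x y' \<and> nat (ps y' - ps x) = n" using y False by (auto simp: cle_def ps_def y'_def)
        then obtain \<gamma> where "dpath \<gamma> x y'" using Suc.IH by blast
        moreover have "y = padd y' e2" by (simp add: y'_def padd_def e2_def)
        ultimately show ?thesis using dpath_snoc by blast
      qed
    qed
  qed
  then show ?thesis using assms by blast
qed

lemma dpath_finite: "finite {\<gamma>. dpath \<gamma> x y}"
proof -
  let ?B = "{fst x..fst y} \<times> {snd x..snd y}"
  have "{\<gamma>. dpath \<gamma> x y} \<subseteq> {\<gamma>. set \<gamma> \<subseteq> ?B \<and> length \<gamma> = nat (ps y - ps x + 1)}"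
  proof
    fix \<gamma> assume "\<gamma> \<in> {\<gamma>. dpath \<gamma> x y}"
    then have d: "dpath \<gamma> x y" by simp
    have "set \<gamma> \<subseteq> ?B" using dpath_box[OF d] by (auto simp: mem_Times_iff)
    moreover have "length \<gamma> = nat (ps y - ps x + 1)" using dpath_length[OF d] by simp
    ultimately show "\<gamma> \<in> {\<gamma>. set \<gamma> \<subseteq> ?B \<and> length \<gamma> = nat (ps y - ps x + 1)}" by simp
  qed
  moreover have "finite {\<gamma>. set \<gamma> \<subseteq> ?B \<and> length \<gamma> = nat (ps y - ps x + 1)}"
    by (rule finite_lists_length_eq) simp
  ultimately show ?thesis by (rule finite_subset)
qed

lemma sum_set_nth:
  assumes "dpath \<gamma> x y" shows "(\<Sum>z\<in>set \<gamma>. w z) = (\<Sum>i<length \<gamma>. w (\<gamma>!i))"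
  using dpath_distinct[OF assms] by (simp add: sum_list_distinct_conv_sum_set[symmetric] sum_list_sum_nth atLeast0LessThan)


definition colset :: "pt list \<Rightarrow> int \<Rightarrow> int set" where
  "colset \<gamma> a = {snd z | z. z \<in> set \<gamma> \<and> fst z = a}"

lemma colset_fin: "finite (colset \<gamma> a)"
proof -
  have "colset \<gamma> a = snd ` (set \<gamma> \<inter> {z. fst z = a})" by (auto simp: colset_def image_iff) force
  then show ?thesis by simp
qed

lemma above_colset: "above A B \<longleftrightarrow> (\<forall>a. (\<exists>z\<in>set A. fst z = a) \<and> (\<exists>z\<in>set B. fst z = a) \<longrightarrow>
   Min (colset B a) \<le> Min (colset A a))"
  unfolding above_def colset_def by simp

lemma above_iff:
  assumes A: "dpath A x y" and B: "dpath B x y"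
  shows "above A B \<longleftrightarrow> (\<forall>i<length A. fst (A!i) \<le> fst (B!i))"
proof -
  have l: "length A = length B" using dpath_length[OF A] dpath_length[OF B] by simp
  show ?thesis
  proof
    assume ab: "above A B"
    show "\<forall>i<length A. fst (A!i) \<le> fst (B!i)"
    proof (rule ccontr)
      assume "\<not> ?thesis"
      then obtain k where k: "k < length A" "fst (B!k) < fst (A!k)" by auto
      define a where "a = fst (A!k)"
      have Ak: "A!k \<in> set A" using k by simp
      have a1: "a \<le> fst y" using dpath_box[OF A Ak] a_def by simp
      have a0: "fst (B!0) \<le> a" using dpath_box[OF A Ak] a_def dpath_0[OF B] by simp
      obtain j where j: "j \<le> length B - 1" "fst (B!j) = a"
        using dpath_ivt[OF B, of "length B - 1" a] a0 a1 dpath_last[OF B] dpath_len[OF B] by auto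
      have jl: "j < length B" using j dpath_len[OF B] by linarith
      have e1: "\<exists>z\<in>set A. fst z = a" using Ak a_def by blast
      have e2: "\<exists>z\<in>set B. fst z = a" using j jl nth_mem by blast
      have ne: "colset B a \<noteq> {}" using e2 by (auto simp: colset_def)
      have "Min (colset B a) \<le> Min (colset A a)" using ab e1 e2 above_colset by blast
      also have "Min (colset A a) \<le> snd (A!k)"
        using Ak a_def by (intro Min_le colset_fin) (auto simp: colset_def)
      finally have m: "Min (colset B a) \<le> snd (A!k)" .
      have "Min (colset B a) \<in> colset B a" using ne colset_fin by (rule Min_in[rotated])
      then obtain z where z: "z \<in> set B" "fst z = a" "snd z = Min (colset B a)" by (auto simp: colset_def)
      obtain t where t: "t < length B" "B!t = z" using z(1) by (auto simp: in_set_conv_nth)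
      have "\<not> t \<le> k" using dpath_mono[OF B, of t k] k l t z a_def by auto
      then have "k < t" by simp
      have "ps (B!t) = ps x + int t" using dpath_sum[OF B t(1)] .
      moreover have "ps (A!k) = ps x + int k" using dpath_sum[OF A k(1)] .
      ultimately show False using m z t \<open>k < t\<close> a_def by (simp add: ps_def)
    qed
  next
    assume le: "\<forall>i<length A. fst (A!i) \<le> fst (B!i)"
    show "above A B" unfolding above_colset
    proof (intro allI impI)
      fix a assume "(\<exists>z\<in>set A. fst z = a) \<and> (\<exists>z\<in>set B. fst z = a)"
      then have e1: "\<exists>z\<in>set A. fst z = a" and e2: "\<exists>z\<in>set B. fst z = a" by auto
      have ne: "colset A a \<noteq> {}" using e1 by (auto simp: colset_def)
      have "Min (colset A a) \<in> colset A a" using ne colset_fin by (rule Min_in[rotated])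
      then obtain z where z: "z \<in> set A" "fst z = a" "snd z = Min (colset A a)" by (auto simp: colset_def)
      obtain i where i: "i < length A" "A!i = z" using z(1) by (auto simp: in_set_conv_nth)
      have iB: "i < length B" using i l by simp
      obtain w where w: "w \<in> set B" "fst w = a" using e2 by auto
      have a0: "fst (B!0) \<le> a" using dpath_box[OF B w(1)] dpath_0[OF B] w by simp
      obtain j where j: "j \<le> i" "fst (B!j) = a"
        using dpath_ivt[OF B iB a0] le i z by auto
      have jl: "j < length B" using j iB by simp
      have "Min (colset B a) \<le> snd (B!j)"
        using j jl by (intro Min_le colset_fin) (auto simp: colset_def)
      also have "snd (B!j) \<le> snd (A!i)"
        using dpath_sum[OF B jl] dpath_sum[OF A i(1)] j i z by (simp add: ps_def)
      finally show "Min (colset B a) \<le> Min (colset A a)" using i z by simp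
    qed
  qed
qed

definition lo :: "pt \<Rightarrow> pt \<Rightarrow> pt" where "lo z w = (if fst w \<le> fst z then z else w)"
definition hi :: "pt \<Rightarrow> pt \<Rightarrow> pt" where "hi z w = (if fst w \<le> fst z then w else z)"

definition W :: "(pt \<Rightarrow> int) \<Rightarrow> pt list \<Rightarrow> int" where
  "W w \<gamma> = (\<Sum>i<length \<gamma>. w (\<gamma>!i))"

definition geo :: "(pt \<Rightarrow> int) \<Rightarrow> pt \<Rightarrow> pt \<Rightarrow> pt list \<Rightarrow> bool" where
  "geo w x y \<gamma> \<longleftrightarrow> dpath \<gamma> x y \<and> (\<forall>\<gamma>'. dpath \<gamma>' x y \<longrightarrow> W w \<gamma>' \<le> W w \<gamma>)"

lemma map2_dpath:
  assumes A: "dpath A x y" and B: "dpath B x y"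
    and f: "\<And>z w. ps z = ps w \<Longrightarrow> f z w = z \<or> f z w = w"
    and fst_step: "\<And>i. Suc i < length A \<Longrightarrow>
        fst (f (A!Suc i) (B!Suc i)) = fst (f (A!i) (B!i)) \<or>
        fst (f (A!Suc i) (B!Suc i)) = fst (f (A!i) (B!i)) + 1"
  shows "dpath (map2 f A B) x y"
proof -
  have l: "length A = length B" using dpath_length[OF A] dpath_length[OF B] by simp
  let ?M = "map2 f A B"
  have lM: "length ?M = length A" using l by simp
  have nth: "?M!i = f (A!i) (B!i)" if "i < length A" for i using that l by simp
  have sum: "ps (?M!i) = ps x + int i" if "i < length A" for i
  proof -
    have "ps (A!i) = ps (B!i)" using dpath_sum[OF A that] dpath_sum[OF B] that l by simp
    then show ?thesis using f[of "A!i" "B!i"] nth[OF that] dpath_sum[OF A that] dpath_sum[OF B] that l by auto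
  qed
  have ne: "?M \<noteq> []" using dpath_len[OF A] lM by auto
  have fx: "f x x = x" "f y y = y" using f[of x x] f[of y y] by auto
  have h: "hd ?M = x" using ne nth[of 0] dpath_0[OF A] dpath_0[OF B] dpath_len[OF A] fx
    by (simp add: hd_conv_nth)
  have la: "last ?M = y" using ne nth[of "length A - 1"] dpath_last[OF A] dpath_last[OF B] dpath_len[OF A] fx l
    by (simp add: last_conv_nth)
  have st: "?M ! Suc i = padd (?M ! i) e1 \<or> ?M ! Suc i = padd (?M ! i) e2" if "Suc i < length ?M" for i
  proof -
    have s1: "ps (?M!Suc i) = ps (?M!i) + 1" using sum[of i] sum[of "Suc i"] that lM by simp
    show ?thesis using fst_step[of i] that lM s1
      by (auto simp: padd_def e1_def e2_def ps_def prod_eq_iff)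
  qed
  show ?thesis unfolding dpath_def using ne h la st by blast
qed

lemma lo_dpath:
  assumes A: "dpath A x y" and B: "dpath B x y"
  shows "dpath (map2 lo A B) x y"
proof (rule map2_dpath[OF A B])
  show "lo z w = z \<or> lo z w = w" for z w by (simp add: lo_def)
  fix i assume "Suc i < length A"
  moreover have "length A = length B" using dpath_length[OF A] dpath_length[OF B] by simp
  ultimately show "fst (lo (A!Suc i) (B!Suc i)) = fst (lo (A!i) (B!i)) \<or>
        fst (lo (A!Suc i) (B!Suc i)) = fst (lo (A!i) (B!i)) + 1"
    using dpath_step[OF A, of i] dpath_step[OF B, of i] by (auto simp: lo_def)
qed

lemma hi_dpath:
  assumes A: "dpath A x y" and B: "dpath B x y"
  shows "dpath (map2 hi A B) x y"
proof (rule map2_dpath[OF A B])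
  show "hi z w = z \<or> hi z w = w" for z w by (simp add: hi_def)
  fix i assume "Suc i < length A"
  moreover have "length A = length B" using dpath_length[OF A] dpath_length[OF B] by simp
  ultimately show "fst (hi (A!Suc i) (B!Suc i)) = fst (hi (A!i) (B!i)) \<or>
        fst (hi (A!Suc i) (B!Suc i)) = fst (hi (A!i) (B!i)) + 1"
    using dpath_step[OF A, of i] dpath_step[OF B, of i] by (auto simp: hi_def)
qed

lemma W_map2: "length A = length B \<Longrightarrow> W w (map2 f A B) = (\<Sum>i<length A. w (f (A!i) (B!i)))"
  by (simp add: W_def)

lemma W_lohi:
  assumes "length A = length B"
  shows "W w (map2 lo A B) + W w (map2 hi A B) = W w A + W w B"
  using assms by (simp add: W_map2 W_def sum.distrib[symmetric] lo_def hi_def) (rule sum.cong, auto)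

lemma ex_max: "finite S \<Longrightarrow> S \<noteq> {} \<Longrightarrow> \<exists>x\<in>S. \<forall>y\<in>S. f y \<le> (f x::int)"
proof -
  assume "finite S" "S \<noteq> {}"
  then have "Max (f ` S) \<in> f ` S" by simp
  then obtain x where "x \<in> S" "f x = Max (f ` S)" by auto
  then show ?thesis using \<open>finite S\<close> by (metis Max_ge finite_imageI image_eqI)
qed

lemma geo_exists:
  assumes "cle x y" shows "\<exists>\<gamma>. geo w x y \<gamma>"
proof -
  let ?P = "{\<gamma>. dpath \<gamma> x y}"
  have fin: "finite ?P" by (rule dpath_finite)
  have ne: "?P \<noteq> {}" using dpath_exists[OF assms] by auto
  obtain g where "g \<in> ?P" "\<forall>\<gamma>\<in>?P. W w \<gamma> \<le> W w g"
    using ex_max[OF fin ne, of "W w"] by blast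
  then show ?thesis unfolding geo_def by auto
qed

lemma geo_finite: "finite {\<gamma>. geo w x y \<gamma>}"
  by (rule finite_subset[OF _ dpath_finite[of x y]]) (auto simp: geo_def)

lemma down_ex1:
  assumes "cle x y" shows "\<exists>!\<gamma>. geo w x y \<gamma> \<and> (\<forall>\<gamma>'. geo w x y \<gamma>' \<longrightarrow> above \<gamma>' \<gamma>)"
proof -
  let ?G = "{\<gamma>. geo w x y \<gamma>}"
  have ne: "?G \<noteq> {}" using geo_exists[OF assms] by auto
  obtain g where g: "geo w x y g" "\<forall>\<gamma>\<in>?G. W fst \<gamma> \<le> W fst g"
    using ex_max[OF geo_finite ne, of "W fst"] by blast
  have gd: "dpath g x y" using g(1) geo_def by auto
  have good: "above \<gamma>' g" if g': "geo w x y \<gamma>'" for \<gamma>'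
  proof -
    have gd': "dpath \<gamma>' x y" using g' geo_def by auto
    have l: "length g = length \<gamma>'" using dpath_length[OF gd] dpath_length[OF gd'] by simp
    let ?m = "map2 lo g \<gamma>'" and ?M = "map2 hi g \<gamma>'"
    have md: "dpath ?m x y" using lo_dpath[OF gd gd'] .
    have Md: "dpath ?M x y" using hi_dpath[OF gd gd'] .
    have "W w ?m + W w ?M = W w g + W w \<gamma>'" using W_lohi[OF l] .
    moreover have "W w ?M \<le> W w g" using g(1) Md geo_def by auto
    moreover have "W w \<gamma>' = W w g" using g(1) g' gd gd' geo_def by (meson order_antisym)
    ultimately have "W w g \<le> W w ?m" by linarith
    then have mg: "geo w x y ?m" using g(1) md unfolding geo_def by (meson order_trans)
    then have "W fst ?m \<le> W fst g" using g(2) by auto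
    have eq: "\<forall>i<length g. fst (?m!i) = fst (g!i)"
    proof (rule ccontr)
      assume "\<not> ?thesis"
      then obtain k where k: "k < length g" "fst (?m!k) \<noteq> fst (g!k)" by auto
      have ge: "\<forall>i\<in>{..<length g}. fst (g!i) \<le> fst (?m!i)" using l by (auto simp: lo_def)
      have strict: "\<exists>a\<in>{..<length g}. fst (g!a) < fst (?m!a)"
        using k ge by (metis lessThan_iff order_le_neq_trans)
      have "(\<Sum>i<length g. fst (g!i)) < (\<Sum>i<length g. fst (?m!i))"
        using sum_strict_mono_ex1[OF finite_lessThan ge strict] .
      then show False using \<open>W fst ?m \<le> W fst g\<close> l by (simp add: W_def)
    qed
    have "\<forall>i<length \<gamma>'. fst (\<gamma>'!i) \<le> fst (g!i)"
    proof (intro allI impI)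
      fix i assume "i < length \<gamma>'"
      then show "fst (\<gamma>'!i) \<le> fst (g!i)" using eq[rule_format, of i] l by (auto simp: lo_def split: if_splits)
    qed
    then show ?thesis using above_iff[OF gd' gd] by simp
  qed
  show ?thesis
  proof (rule ex1I[of _ g])
    show "geo w x y g \<and> (\<forall>\<gamma>'. geo w x y \<gamma>' \<longrightarrow> above \<gamma>' g)" using g(1) good by blast
  next
    fix h assume h: "geo w x y h \<and> (\<forall>\<gamma>'. geo w x y \<gamma>' \<longrightarrow> above \<gamma>' h)"
    have hd: "dpath h x y" using h geo_def by auto
    have l: "length h = length g" using dpath_length[OF gd] dpath_length[OF hd] by simp
    have "above h g" using good h by blast
    moreover have "above g h" using h g(1) by blast
    ultimately have "\<forall>i<length h. fst (h!i) = fst (g!i)"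
      using above_iff[OF hd gd] above_iff[OF gd hd] l by (auto intro: order_antisym)
    then show "h = g" using dpath_eqI[OF hd gd] by blast
  qed
qed

lemma up_ex1:
  assumes "cle x y" shows "\<exists>!\<gamma>. geo w x y \<gamma> \<and> (\<forall>\<gamma>'. geo w x y \<gamma>' \<longrightarrow> above \<gamma> \<gamma>')"
proof -
  let ?G = "{\<gamma>. geo w x y \<gamma>}"
  have ne: "?G \<noteq> {}" using geo_exists[OF assms] by auto
  obtain g where g: "geo w x y g" "\<forall>\<gamma>\<in>?G. W (\<lambda>z. - fst z) \<gamma> \<le> W (\<lambda>z. - fst z) g"
    using ex_max[OF geo_finite ne, of "W (\<lambda>z. - fst z)"] by blast
  have gd: "dpath g x y" using g(1) geo_def by auto
  have good: "above g \<gamma>'" if g': "geo w x y \<gamma>'" for \<gamma>'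
  proof -
    have gd': "dpath \<gamma>' x y" using g' geo_def by auto
    have l: "length g = length \<gamma>'" using dpath_length[OF gd] dpath_length[OF gd'] by simp
    let ?m = "map2 lo g \<gamma>'" and ?M = "map2 hi g \<gamma>'"
    have md: "dpath ?m x y" using lo_dpath[OF gd gd'] .
    have Md: "dpath ?M x y" using hi_dpath[OF gd gd'] .
    have "W w ?m + W w ?M = W w g + W w \<gamma>'" using W_lohi[OF l] .
    moreover have "W w ?m \<le> W w g" using g(1) md geo_def by auto
    moreover have "W w \<gamma>' = W w g" using g(1) g' gd gd' geo_def by (meson order_antisym)
    ultimately have "W w g \<le> W w ?M" by linarith
    then have mg: "geo w x y ?M" using g(1) Md unfolding geo_def by (meson order_trans)
    then have "W (\<lambda>z. - fst z) ?M \<le> W (\<lambda>z. - fst z) g" using g(2) by auto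
    have eq: "\<forall>i<length g. fst (?M!i) = fst (g!i)"
    proof (rule ccontr)
      assume "\<not> ?thesis"
      then obtain k where k: "k < length g" "fst (?M!k) \<noteq> fst (g!k)" by auto
      have ge: "\<forall>i\<in>{..<length g}. - fst (g!i) \<le> - fst (?M!i)" using l by (auto simp: hi_def)
      have strict: "\<exists>a\<in>{..<length g}. - fst (g!a) < - fst (?M!a)"
        using k ge by (metis lessThan_iff order_le_neq_trans neg_equal_iff_equal)
      have "(\<Sum>i<length g. - fst (g!i)) < (\<Sum>i<length g. - fst (?M!i))"
        using sum_strict_mono_ex1[OF finite_lessThan ge strict] .
      then show False using \<open>W (\<lambda>z. - fst z) ?M \<le> W (\<lambda>z. - fst z) g\<close> l by (simp add: W_def)
    qed
    have "\<forall>i<length g. fst (g!i) \<le> fst (\<gamma>'!i)"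
    proof (intro allI impI)
      fix i assume "i < length g"
      then show "fst (g!i) \<le> fst (\<gamma>'!i)" using eq[rule_format, of i] l by (auto simp: hi_def split: if_splits)
    qed
    then show ?thesis using above_iff[OF gd gd'] by simp
  qed
  show ?thesis
  proof (rule ex1I[of _ g])
    show "geo w x y g \<and> (\<forall>\<gamma>'. geo w x y \<gamma>' \<longrightarrow> above g \<gamma>')" using g(1) good by blast
  next
    fix h assume h: "geo w x y h \<and> (\<forall>\<gamma>'. geo w x y \<gamma>' \<longrightarrow> above h \<gamma>')"
    have hd: "dpath h x y" using h geo_def by auto
    have l: "length h = length g" using dpath_length[OF gd] dpath_length[OF hd] by simp
    have "above g h" using good h by blast
    moreover have "above h g" using h g(1) by blast
    ultimately have "\<forall>i<length h. fst (h!i) = fst (g!i)"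
      using above_iff[OF hd gd] above_iff[OF gd hd] l by (auto intro: order_antisym)
    then show "h = g" using dpath_eqI[OF hd gd] by blast
  qed
qed


lemma pweight_W: "dpath \<gamma> x y \<Longrightarrow> pweight \<omega> \<gamma> = W (\<lambda>z. int (\<omega> z)) \<gamma>"
  unfolding pweight_def W_def by (rule sum_set_nth)

lemma geodesic_eq: "geodesic \<omega> x y = geo (\<lambda>z. int (\<omega> z)) x y"
  by (rule ext) (auto simp: geodesic_def geo_def pweight_W)

definition fl :: "(pt \<Rightarrow> nat) \<Rightarrow> (pt \<Rightarrow> int) \<Rightarrow> (pt \<Rightarrow> int) \<Rightarrow> pt \<Rightarrow> pt \<Rightarrow> int" where
  "fl \<omega> \<omega>H \<omega>V u z = (if z = u then 0 else if snd z = snd u then \<omega>H z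
      else if fst z = fst u then \<omega>V z else int (\<omega> z))"

lemma lweight_W:
  assumes d: "dpath \<gamma> x y"
  shows "lweight \<omega> \<omega>H \<omega>V x y \<gamma> = W (fl \<omega> \<omega>H \<omega>V x) \<gamma>"
proof -
  let ?S = "set \<gamma>"
  have fin: "finite ?S" by simp
  have 1: "(\<Sum>z\<in>(?S \<inter> {z. snd z = snd x}) - {x}. \<omega>H z) = (\<Sum>z\<in>?S. if z \<noteq> x \<and> snd z = snd x then \<omega>H z else 0)"
  proof -
    have "(?S \<inter> {z. snd z = snd x}) - {x} = {z \<in> ?S. z \<noteq> x \<and> snd z = snd x}" by auto
    then show ?thesis using sum.inter_filter[OF fin] by simp
  qed
  have 2: "(\<Sum>z\<in>(?S \<inter> {z. fst z = fst x}) - {x}. \<omega>V z) = (\<Sum>z\<in>?S. if z \<noteq> x \<and> fst z = fst x then \<omega>V z else 0)"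
  proof -
    have "(?S \<inter> {z. fst z = fst x}) - {x} = {z \<in> ?S. z \<noteq> x \<and> fst z = fst x}" by auto
    then show ?thesis using sum.inter_filter[OF fin] by simp
  qed
  let ?P = "\<lambda>z. fst x + 1 \<le> fst z \<and> fst z \<le> fst y \<and> snd x + 1 \<le> snd z \<and> snd z \<le> snd y"
  have 3: "(\<Sum>z\<in>?S \<inter> {z. ?P z}. int (\<omega> z)) = (\<Sum>z\<in>?S. if ?P z then int (\<omega> z) else 0)"
  proof -
    have "?S \<inter> {z. ?P z} = {z \<in> ?S. ?P z}" by auto
    then show ?thesis using sum.inter_filter[OF fin] by simp
  qed
  have "lweight \<omega> \<omega>H \<omega>V x y \<gamma> = (\<Sum>z\<in>?S. fl \<omega> \<omega>H \<omega>V x z)"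
    unfolding lweight_def 1 2 3 sum.distrib[symmetric]
  proof (rule sum.cong[OF refl])
    fix z assume z: "z \<in> ?S"
    have bx: "fst x \<le> fst z \<and> fst z \<le> fst y \<and> snd x \<le> snd z \<and> snd z \<le> snd y" using dpath_box[OF d z] .
    show "(if z \<noteq> x \<and> snd z = snd x then \<omega>H z else 0) + (if z \<noteq> x \<and> fst z = fst x then \<omega>V z else 0) +
          (if ?P z then int (\<omega> z) else 0) = fl \<omega> \<omega>H \<omega>V x z"
      using bx unfolding fl_def by (auto simp: prod_eq_iff)
  qed
  then show ?thesis using sum_set_nth[OF d] W_def by simp
qed

lemma lgeodesic_eq: "lgeodesic \<omega> \<omega>H \<omega>V x y = geo (fl \<omega> \<omega>H \<omega>V x) x y"
  by (rule ext) (auto simp: lgeodesic_def geo_def lweight_W)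

lemma pi_minus_eq: "pi_minus \<omega> u v = (THE \<gamma>. geo (\<lambda>z. int (\<omega> z)) u v \<gamma> \<and> (\<forall>\<gamma>'. geo (\<lambda>z. int (\<omega> z)) u v \<gamma>' \<longrightarrow> above \<gamma>' \<gamma>))"
  unfolding pi_minus_def geodesic_eq ..
lemma pi_plus_eq: "pi_plus \<omega> u v = (THE \<gamma>. geo (\<lambda>z. int (\<omega> z)) u v \<gamma> \<and> (\<forall>\<gamma>'. geo (\<lambda>z. int (\<omega> z)) u v \<gamma>' \<longrightarrow> above \<gamma> \<gamma>'))"
  unfolding pi_plus_def geodesic_eq ..
lemma lpi_minus_eq: "lpi_minus \<omega> \<omega>H \<omega>V u v = (THE \<gamma>. geo (fl \<omega> \<omega>H \<omega>V u) u v \<gamma> \<and> (\<forall>\<gamma>'. geo (fl \<omega> \<omega>H \<omega>V u) u v \<gamma>' \<longrightarrow> above \<gamma>' \<gamma>))"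
  unfolding lpi_minus_def lgeodesic_eq ..
lemma lpi_plus_eq: "lpi_plus \<omega> \<omega>H \<omega>V u v = (THE \<gamma>. geo (fl \<omega> \<omega>H \<omega>V u) u v \<gamma> \<and> (\<forall>\<gamma>'. geo (fl \<omega> \<omega>H \<omega>V u) u v \<gamma>' \<longrightarrow> above \<gamma> \<gamma>'))"
  unfolding lpi_plus_def lgeodesic_eq ..

lemma LPP_ge: "dpath \<gamma> s y \<Longrightarrow> pweight \<omega> \<gamma> \<le> LPP \<omega> s y"
  unfolding LPP_def by (rule Max_ge) (auto intro: finite_imageI dpath_finite)

lemma LPP_att: assumes "cle s y" shows "\<exists>\<gamma>. dpath \<gamma> s y \<and> LPP \<omega> s y = pweight \<omega> \<gamma>"
proof -
  have ne: "pweight \<omega> ` {\<gamma>. dpath \<gamma> s y} \<noteq> {}" using dpath_exists[OF assms] by auto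
  have "LPP \<omega> s y \<in> pweight \<omega> ` {\<gamma>. dpath \<gamma> s y}" unfolding LPP_def
    by (rule Max_in[OF finite_imageI[OF dpath_finite] ne])
  then show ?thesis by auto
qed

lemma LPP_step:
  assumes "cle s y'" "y = padd y' e1 \<or> y = padd y' e2"
  shows "LPP \<omega> s y' + int (\<omega> y) \<le> LPP \<omega> s y"
proof -
  obtain \<gamma> where g: "dpath \<gamma> s y'" "LPP \<omega> s y' = pweight \<omega> \<gamma>" using LPP_att[OF assms(1)] by blast
  have d: "dpath (\<gamma>@[y]) s y" using dpath_snoc[OF g(1) assms(2)] .
  have "y \<notin> set \<gamma>"
  proof
    assume "y \<in> set \<gamma>"
    from dpath_box[OF g(1) this] show False using assms(2) by (auto simp: padd_def e1_def e2_def)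
  qed
  then have "pweight \<omega> (\<gamma>@[y]) = pweight \<omega> \<gamma> + int (\<omega> y)" by (simp add: pweight_def)
  then show ?thesis using LPP_ge[OF d, of \<omega>] g(2) by simp
qed

lemma LPP_self: "int (\<omega> x) \<le> LPP \<omega> x x"
proof -
  have "dpath [x] x x" by (simp add: dpath_def)
  from LPP_ge[OF this, of \<omega>] show ?thesis by (simp add: pweight_def)
qed

lemma Lset_le:
  assumes "fst b < fst x" "bdd_above (Lset \<omega> c b x)" "j \<le> snd x - snd b"
  shows "Lcol c j + LPP \<omega> (fst b + 1, snd b + j) x \<le> Lfun \<omega> c b x"
proof -
  have "Lcol c j + LPP \<omega> (fst b + 1, snd b + j) x \<in> Lset \<omega> c b x" using assms(3) unfolding Lset_def by blast
  then have "Lcol c j + LPP \<omega> (fst b + 1, snd b + j) x \<le> Sup (Lset \<omega> c b x)" using assms(2) by (rule cSup_upper)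
  then show ?thesis using assms(1) by (simp add: Lfun_def)
qed

lemma Lfun_V:
  assumes fin: "\<forall>x. fst b < fst x \<longrightarrow> bdd_above (Lset \<omega> c b x)" and x: "fst b < fst x"
  shows "int (\<omega> x) + Lfun \<omega> c b (fst x, snd x - 1) \<le> Lfun \<omega> c b x"
proof -
  let ?x' = "(fst x, snd x - 1)"
  have "Lfun \<omega> c b ?x' = Sup (Lset \<omega> c b ?x')" using x by (simp add: Lfun_def)
  moreover have "Sup (Lset \<omega> c b ?x') \<le> Lfun \<omega> c b x - int (\<omega> x)"
  proof (rule cSup_least)
    show "Lset \<omega> c b ?x' \<noteq> {}" unfolding Lset_def by auto
  next
    fix e assume "e \<in> Lset \<omega> c b ?x'"
    then obtain j where j: "j \<le> snd x - 1 - snd b" "e = Lcol c j + LPP \<omega> (fst b + 1, snd b + j) ?x'"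
      unfolding Lset_def by auto
    have "LPP \<omega> (fst b + 1, snd b + j) ?x' + int (\<omega> x) \<le> LPP \<omega> (fst b + 1, snd b + j) x"
      using x j by (intro LPP_step) (auto simp: cle_def padd_def e2_def)
    moreover have "Lcol c j + LPP \<omega> (fst b + 1, snd b + j) x \<le> Lfun \<omega> c b x"
      using x j fin[rule_format, OF x] by (intro Lset_le) auto
    ultimately show "e \<le> Lfun \<omega> c b x - int (\<omega> x)" using j by simp
  qed
  ultimately show ?thesis by simp
qed

lemma Lfun_H:
  assumes fin: "\<forall>x. fst b < fst x \<longrightarrow> bdd_above (Lset \<omega> c b x)" and x: "fst b < fst x"
  shows "int (\<omega> x) + Lfun \<omega> c b (fst x - 1, snd x) \<le> Lfun \<omega> c b x"
proof (cases "fst x - 1 = fst b")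
  case True
  have "Lfun \<omega> c b (fst x - 1, snd x) = Lcol c (snd x - snd b)" using True by (simp add: Lfun_def)
  moreover have "Lcol c (snd x - snd b) + LPP \<omega> (fst b + 1, snd b + (snd x - snd b)) x \<le> Lfun \<omega> c b x"
    using x fin[rule_format, OF x] by (intro Lset_le) auto
  moreover have "(fst b + 1, snd b + (snd x - snd b)) = x" using True by (simp add: prod_eq_iff)
  ultimately show ?thesis using LPP_self[of \<omega> x] by simp
next
  case False
  let ?x' = "(fst x - 1, snd x)"
  have x': "fst b < fst ?x'" using False x by simp
  have "Lfun \<omega> c b ?x' = Sup (Lset \<omega> c b ?x')" using x' by (simp add: Lfun_def)
  moreover have "Sup (Lset \<omega> c b ?x') \<le> Lfun \<omega> c b x - int (\<omega> x)"
  proof (rule cSup_least)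
    show "Lset \<omega> c b ?x' \<noteq> {}" unfolding Lset_def by auto
  next
    fix e assume "e \<in> Lset \<omega> c b ?x'"
    then obtain j where j: "j \<le> snd x - snd b" "e = Lcol c j + LPP \<omega> (fst b + 1, snd b + j) ?x'"
      unfolding Lset_def by auto
    have "LPP \<omega> (fst b + 1, snd b + j) ?x' + int (\<omega> x) \<le> LPP \<omega> (fst b + 1, snd b + j) x"
      using x' j by (intro LPP_step) (auto simp: cle_def padd_def e1_def)
    moreover have "Lcol c j + LPP \<omega> (fst b + 1, snd b + j) x \<le> Lfun \<omega> c b x"
      using x j fin[rule_format, OF x] by (intro Lset_le) auto
    ultimately show "e \<le> Lfun \<omega> c b x - int (\<omega> x)" using j by simp
  qed
  ultimately show ?thesis by simp
qed

lemma omH_ge: "\<forall>x. fst b < fst x \<longrightarrow> bdd_above (Lset \<omega> c b x) \<Longrightarrow> fst b < fst x \<Longrightarrow> int (\<omega> x) \<le> omH \<omega> c b x"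
  using Lfun_H[of b \<omega> c x] by (simp add: omH_def)

lemma omV_ge: "\<forall>x. fst b < fst x \<longrightarrow> bdd_above (Lset \<omega> c b x) \<Longrightarrow> fst b < fst x \<Longrightarrow> int (\<omega> x) \<le> omV \<omega> c b x"
  using Lfun_V[of b \<omega> c x] by (simp add: omV_def)


lemma second_pt:
  assumes d: "dpath \<eta> u v" and m: "p \<in> set \<eta>" and ps: "ps p = ps u + 1"
  shows "1 < length \<eta> \<and> \<eta>!1 = p"
proof -
  obtain k where k: "k < length \<eta>" "\<eta>!k = p" using m by (auto simp: in_set_conv_nth)
  have "ps (\<eta>!k) = ps u + int k" using dpath_sum[OF d k(1)] .
  then have "k = 1" using k ps by simp
  then show ?thesis using k by simp
qed

theorem lemma3p4:
  fixes \<omega> :: "pt \<Rightarrow> nat" and c :: "int \<Rightarrow> nat" and b u v :: pt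
  assumes fin: "\<forall>x. fst b < fst x \<longrightarrow> bdd_above (Lset \<omega> c b x)"
    and bu: "fst b < fst u"
    and uv: "cle u v"
  shows "(padd u e1 \<in> set (lpi_minus \<omega> (omH \<omega> c b) (omV \<omega> c b) u v) \<longrightarrow>
            above (pi_minus \<omega> u v) (lpi_minus \<omega> (omH \<omega> c b) (omV \<omega> c b) u v))
       \<and> (padd u e2 \<in> set (lpi_plus \<omega> (omH \<omega> c b) (omV \<omega> c b) u v) \<longrightarrow>
            above (lpi_plus \<omega> (omH \<omega> c b) (omV \<omega> c b) u v) (pi_plus \<omega> u v))"
proof -
  define f where "f = fl \<omega> (omH \<omega> c b) (omV \<omega> c b) u"
  define wb where "wb = (\<lambda>z. int (\<omega> z))"
  have gnn: "wb z \<le> f z" if "z \<noteq> u" "fst u \<le> fst z" for z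
    using that omH_ge[OF fin, of z] omV_ge[OF fin, of z] bu unfolding f_def fl_def wb_def by auto
  have fint: "f z = wb z" if "z \<noteq> u" "snd z \<noteq> snd u" "fst z \<noteq> fst u" for z
    using that unfolding f_def fl_def wb_def by auto
  have P1: "geo wb u v (pi_minus \<omega> u v) \<and> (\<forall>\<gamma>'. geo wb u v \<gamma>' \<longrightarrow> above \<gamma>' (pi_minus \<omega> u v))"
    unfolding pi_minus_eq wb_def by (rule theI'[OF down_ex1[OF uv]])
  have P2: "geo wb u v (pi_plus \<omega> u v) \<and> (\<forall>\<gamma>'. geo wb u v \<gamma>' \<longrightarrow> above (pi_plus \<omega> u v) \<gamma>')"
    unfolding pi_plus_eq wb_def by (rule theI'[OF up_ex1[OF uv]])
  have L1: "geo f u v (lpi_minus \<omega> (omH \<omega> c b) (omV \<omega> c b) u v) \<and>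
     (\<forall>\<gamma>'. geo f u v \<gamma>' \<longrightarrow> above \<gamma>' (lpi_minus \<omega> (omH \<omega> c b) (omV \<omega> c b) u v))"
    unfolding lpi_minus_eq f_def by (rule theI'[OF down_ex1[OF uv]])
  have L2: "geo f u v (lpi_plus \<omega> (omH \<omega> c b) (omV \<omega> c b) u v) \<and>
     (\<forall>\<gamma>'. geo f u v \<gamma>' \<longrightarrow> above (lpi_plus \<omega> (omH \<omega> c b) (omV \<omega> c b) u v) \<gamma>')"
    unfolding lpi_plus_eq f_def by (rule theI'[OF up_ex1[OF uv]])
  show ?thesis
  proof (intro conjI impI)
    let ?g = "pi_minus \<omega> u v" and ?e = "lpi_minus \<omega> (omH \<omega> c b) (omV \<omega> c b) u v"
    assume m: "padd u e1 \<in> set ?e"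
    have gd: "dpath ?g u v" using P1 geo_def by auto
    have ed: "dpath ?e u v" using L1 geo_def by auto
    have l: "length ?g = length ?e" using dpath_length[OF gd] dpath_length[OF ed] by simp
    have e1: "1 < length ?e \<and> ?e!1 = padd u e1"
      using second_pt[OF ed m] by (simp add: ps_def padd_def e1_def)
    have pt: "f (lo (?g!i) (?e!i)) + wb (hi (?g!i) (?e!i)) \<ge> f (?e!i) + wb (?g!i)"
      if i: "i < length ?g" for i
    proof -
      let ?a = "?g!i" and ?z = "?e!i"
      have sa: "ps ?a = ps u + int i" using dpath_sum[OF gd i] .
      have sz: "ps ?z = ps u + int i" using dpath_sum[OF ed] i l by simp
      have ba: "fst u \<le> fst ?a \<and> snd u \<le> snd ?a" using dpath_box[OF gd nth_mem[OF i]] by simp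
      show ?thesis
      proof (cases "fst ?z < fst ?a")
        case True
        have i0: "i \<noteq> 0" using True dpath_0[OF gd] dpath_0[OF ed] by (cases "i = 0") auto
        then have "fst (?e!1) \<le> fst ?z" using dpath_mono[OF ed, of 1 i] i l by simp
        then have fz: "fst u + 1 \<le> fst ?z" using e1 by (simp add: padd_def e1_def)
        have sz2: "snd u < snd ?z" using True sa sz ba by (simp add: ps_def)
        have "f ?z = wb ?z" using fz sz2 by (intro fint) auto
        moreover have "wb ?a \<le> f ?a" using sa i0 ba by (intro gnn) auto
        ultimately show ?thesis using True by (simp add: lo_def hi_def)
      next
        case False
        show ?thesis
        proof (cases "fst ?z = fst ?a")
          case True
          then have "?z = ?a" using sa sz by (simp add: ps_def prod_eq_iff)
          then show ?thesis by (simp add: lo_def hi_def)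
        next
          case False
          then show ?thesis using \<open>\<not> fst ?z < fst ?a\<close> by (simp add: lo_def hi_def)
        qed
      qed
    qed
    let ?m = "map2 lo ?g ?e" and ?M = "map2 hi ?g ?e"
    have md: "dpath ?m u v" using lo_dpath[OF gd ed] .
    have Md: "dpath ?M u v" using hi_dpath[OF gd ed] .
    have "W f ?e + W wb ?g \<le> W f ?m + W wb ?M"
      using l pt by (simp add: W_map2 W_def sum.distrib[symmetric]) (rule sum_mono, simp)
    moreover have "W wb ?M \<le> W wb ?g" using P1 Md geo_def by auto
    ultimately have "W f ?e \<le> W f ?m" by linarith
    then have "geo f u v ?m" using L1 md unfolding geo_def by (meson order_trans)
    then have "above ?m ?e" using L1 by blast
    then have "\<forall>i<length ?m. fst (?m!i) \<le> fst (?e!i)" using above_iff[OF md ed] by simp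
    then have "\<forall>i<length ?g. fst (?g!i) \<le> fst (?e!i)" using l by (auto simp: lo_def split: if_splits)
    then show "above ?g ?e" using above_iff[OF gd ed] by simp
  next
    let ?g = "pi_plus \<omega> u v" and ?e = "lpi_plus \<omega> (omH \<omega> c b) (omV \<omega> c b) u v"
    assume m: "padd u e2 \<in> set ?e"
    have gd: "dpath ?g u v" using P2 geo_def by auto
    have ed: "dpath ?e u v" using L2 geo_def by auto
    have l: "length ?g = length ?e" using dpath_length[OF gd] dpath_length[OF ed] by simp
    have e2: "1 < length ?e \<and> ?e!1 = padd u e2"
      using second_pt[OF ed m] by (simp add: ps_def padd_def e2_def)
    have pt: "f (hi (?g!i) (?e!i)) + wb (lo (?g!i) (?e!i)) \<ge> f (?e!i) + wb (?g!i)"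
      if i: "i < length ?g" for i
    proof -
      let ?a = "?g!i" and ?z = "?e!i"
      have sa: "ps ?a = ps u + int i" using dpath_sum[OF gd i] .
      have sz: "ps ?z = ps u + int i" using dpath_sum[OF ed] i l by simp
      have ba: "fst u \<le> fst ?a \<and> snd u \<le> snd ?a" using dpath_box[OF gd nth_mem[OF i]] by simp
      show ?thesis
      proof (cases "fst ?a < fst ?z")
        case True
        have i0: "i \<noteq> 0" using True dpath_0[OF gd] dpath_0[OF ed] by (cases "i = 0") auto
        then have "snd (?e!1) \<le> snd ?z" using dpath_mono[OF ed, of 1 i] i l by simp
        then have sz2: "snd u + 1 \<le> snd ?z" using e2 by (simp add: padd_def e2_def)
        have fz: "fst u < fst ?z" using True ba by simp
        have "f ?z = wb ?z" using fz sz2 by (intro fint) auto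
        moreover have "wb ?a \<le> f ?a" using sa i0 ba by (intro gnn) auto
        ultimately show ?thesis using True by (simp add: lo_def hi_def)
      next
        case False
        show ?thesis
        proof (cases "fst ?z = fst ?a")
          case True
          then have "?z = ?a" using sa sz by (simp add: ps_def prod_eq_iff)
          then show ?thesis by (simp add: lo_def hi_def)
        next
          case False
          then show ?thesis using \<open>\<not> fst ?a < fst ?z\<close> by (simp add: lo_def hi_def)
        qed
      qed
    qed
    let ?m = "map2 lo ?g ?e" and ?M = "map2 hi ?g ?e"
    have md: "dpath ?m u v" using lo_dpath[OF gd ed] .
    have Md: "dpath ?M u v" using hi_dpath[OF gd ed] .
    have "W f ?e + W wb ?g \<le> W f ?M + W wb ?m"
      using l pt by (simp add: W_map2 W_def sum.distrib[symmetric]) (rule sum_mono, simp)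
    moreover have "W wb ?m \<le> W wb ?g" using P2 md geo_def by auto
    ultimately have "W f ?e \<le> W f ?M" by linarith
    then have "geo f u v ?M" using L2 Md unfolding geo_def by (meson order_trans)
    then have "above ?e ?M" using L2 by blast
    then have "\<forall>i<length ?e. fst (?e!i) \<le> fst (?M!i)" using above_iff[OF ed Md] by simp
    then have "\<forall>i<length ?e. fst (?e!i) \<le> fst (?g!i)" using l by (auto simp: hi_def split: if_splits)
    then show "above ?e ?g" using above_iff[OF ed gd] by simp
  qed
qed

end
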